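(* Let $p$ be a prime, let $n,d\in\mathbb{Z}_{\ge1}$ and let $\tilde R\in\mathbb{P}^d(\mathbb{Z}/p^n\mathbb{Z})$. Let $v=(r_0,\dots,r_d)\in\mathbb{Z}^{d+1}\setminus\{0\}$ be primitive, i.e. $\gcd(r_0,\dots,r_d)=1$, such that $R=(r_0:\dots:r_d)\in\mathbb{P}^d(\mathbb{Q})$ reduces to $\tilde R$ modulo $p^n$. Then the lattice $L\subset\mathbb{Z}^{d+1}$ generated by $\{v\}\cup\{p^ne_i:0\le i\le d\}$ contains every vector $w\in\mathbb{Z}^{d+1}\setminus\{0\}$ such that the corresponding point of $\mathbb{P}^d(\mathbb{Q})$ reduces modulo $p^n$ to $\tilde R$. Moreover, if $u=a_0v+p^n(a_1e_0+a_2e_1+\cdots+a_{d+1}e_d)\in L$ with $a_0,\dots,a_{d+1}\in\mathbb{Z}$ and $p\nmid a_0$, then the point of $\mathbb{P}^d(\mathbb{Q})$ with coordinate vector $u$ reduces modulo $p^n$ to $\tilde R$.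
   Context: $e_0,\dots,e_d$ is the standard basis of $\mathbb{Z}^{d+1}$. The reduction of a point of $\mathbb{P}^d(\mathbb{Q})$ modulo $p^n$ is obtained by reducing a primitive integer coordinate vector modulo $p^n$. *)

theory Defs
  imports "HOL-Computational_Algebra.Primes" "HOL-Number_Theory.Cong"
begin

text \<open>Integer vectors in Z^(d+1) are functions nat => int with coordinates 0..d,
  vanishing at indices > d.\<close>
definition zvec :: "nat \<Rightarrow> (nat \<Rightarrow> int) set" where
  "zvec d = {x. \<forall>i>d. x i = 0}"

definition std_basis :: "nat \<Rightarrow> nat \<Rightarrow> int" where
  "std_basis i = (\<lambda>j. if j = i then 1 else 0)"

definition primitive_vec :: "nat \<Rightarrow> (nat \<Rightarrow> int) \<Rightarrow> bool" where
  "primitive_vec d v \<longleftrightarrow> Gcd (v ` {..d}) = 1"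

text \<open>The point of P^d(Z/p^n Z) represented by an integer vector x (taken mod p^n):
  the class of all integer lifts y of vectors that are unit multiples of x mod p^n.\<close>
definition proj_class :: "int \<Rightarrow> nat \<Rightarrow> nat \<Rightarrow> (nat \<Rightarrow> int) \<Rightarrow> (nat \<Rightarrow> int) set" where
  "proj_class p n d x =
     {y \<in> zvec d. \<exists>c::int. coprime c p \<and> (\<forall>i\<le>d. [y i = c * x i] (mod p ^ n))}"

definition proj_space :: "int \<Rightarrow> nat \<Rightarrow> nat \<Rightarrow> (nat \<Rightarrow> int) set set" where
  "proj_space p n d = {proj_class p n d x | x. x \<in> zvec d \<and> (\<exists>i\<le>d. \<not> p dvd x i)}"

text \<open>The point of P^d(Q) with nonzero integer coordinate vector w reduces modulo p^n
  to Rt: some primitive integer coordinate vector of the same rational point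
  reduces mod p^n to Rt.\<close>
definition reduces_to :: "int \<Rightarrow> nat \<Rightarrow> nat \<Rightarrow> (nat \<Rightarrow> int) \<Rightarrow> (nat \<Rightarrow> int) set \<Rightarrow> bool" where
  "reduces_to p n d w Rt \<longleftrightarrow>
     (\<exists>v'. v' \<in> zvec d \<and> primitive_vec d v' \<and>
        (\<exists>a b::int. a \<noteq> 0 \<and> b \<noteq> 0 \<and> (\<forall>i\<le>d. a * v' i = b * w i)) \<and>
        proj_class p n d v' = Rt)"

definition lattice_gen :: "(nat \<Rightarrow> int) list \<Rightarrow> (nat \<Rightarrow> int) set" where
  "lattice_gen gs = {(\<lambda>j. \<Sum>k<length gs. c k * (gs ! k) j) | c. True}"

end

theory Submission
  imports Defs
begin

lemma L1:
  fixes p c :: int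
  assumes "coprime c p" "\<forall>i\<le>d. [x i = c * y i] (mod p ^ n)" "n \<ge> 1"
  shows "proj_class p n d x = proj_class p n d y"
proof -
  have cp: "coprime c (p ^ n)" using assms(1) by simp
  obtain ci where ci: "[c * ci = 1] (mod p ^ n)" using cong_solve_coprime_int[OF cp] by blast
  have cip: "coprime ci p"
  proof -
    have "coprime (c * ci) (p ^ n)" using ci
      by (metis cong_imp_coprime cong_sym coprime_1_left)
    then show ?thesis using assms(3) by simp
  qed
  have yx: "\<forall>i\<le>d. [y i = ci * x i] (mod p ^ n)"
  proof (intro allI impI)
    fix i assume "i \<le> d"
    have "[ci * x i = ci * (c * y i)] (mod p ^ n)" using assms(2) \<open>i \<le> d\<close> cong_scalar_left by blast
    also have "ci * (c * y i) = (c * ci) * y i" by simp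
    also have "[(c * ci) * y i = 1 * y i] (mod p ^ n)" using ci cong_scalar_right by blast
    finally show "[y i = ci * x i] (mod p ^ n)" by (simp add: cong_sym)
  qed
  show ?thesis
  proof
    show "proj_class p n d x \<subseteq> proj_class p n d y"
    proof
      fix z assume "z \<in> proj_class p n d x"
      then obtain e where z: "z \<in> zvec d" "coprime e p" "\<forall>i\<le>d. [z i = e * x i] (mod p ^ n)"
        unfolding proj_class_def by blast
      have "\<forall>i\<le>d. [z i = (e * c) * y i] (mod p ^ n)"
      proof (intro allI impI)
        fix i assume i: "i \<le> d"
        have "[z i = e * x i] (mod p ^ n)" using z i by blast
        also have "[e * x i = e * (c * y i)] (mod p ^ n)" using assms(2) i cong_scalar_left by blast
        finally show "[z i = (e * c) * y i] (mod p ^ n)" by (simp add: mult.assoc)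
      qed
      moreover have "coprime (e * c) p" using z(2) assms(1) by simp
      ultimately show "z \<in> proj_class p n d y" using z(1) unfolding proj_class_def by blast
    qed
  next
    show "proj_class p n d y \<subseteq> proj_class p n d x"
    proof
      fix z assume "z \<in> proj_class p n d y"
      then obtain e where z: "z \<in> zvec d" "coprime e p" "\<forall>i\<le>d. [z i = e * y i] (mod p ^ n)"
        unfolding proj_class_def by blast
      have "\<forall>i\<le>d. [z i = (e * ci) * x i] (mod p ^ n)"
      proof (intro allI impI)
        fix i assume i: "i \<le> d"
        have "[z i = e * y i] (mod p ^ n)" using z i by blast
        also have "[e * y i = e * (ci * x i)] (mod p ^ n)" using yx i cong_scalar_left by blast
        finally show "[z i = (e * ci) * x i] (mod p ^ n)" by (simp add: mult.assoc)
      qed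
      moreover have "coprime (e * ci) p" using z(2) cip by simp
      ultimately show "z \<in> proj_class p n d x" using z(1) unfolding proj_class_def by blast
    qed
  qed
qed

lemma L2:
  fixes a b :: int
  assumes "primitive_vec d v'" "b \<noteq> 0" "\<forall>i\<le>d. a * v' i = b * w i"
  shows "\<exists>m. \<forall>i\<le>d. w i = m * v' i"
proof -
  have "b dvd Gcd ((*) a ` (v' ` {..d}))"
    using assms(3) by (auto simp: dvd_Gcd_iff)
  then have "b dvd a" using assms(1) by (simp add: Gcd_mult primitive_vec_def)
  then obtain m where m: "a = b * m" by blast
  show ?thesis
  proof (intro exI allI impI)
    fix i assume "i \<le> d"
    then have "b * (m * v' i) = b * w i" using assms(3) m by (simp add: mult.assoc)
    then show "w i = m * v' i" using assms(2) by simp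
  qed
qed

lemma L3:
  fixes m :: int
  assumes "primitive_vec d v" "\<forall>i\<le>d. v i = m * x i"
  shows "m dvd 1"
proof -
  have "m dvd Gcd (v ` {..d})" using assms(2) by (auto simp: dvd_Gcd_iff)
  then show ?thesis using assms(1) by (simp add: primitive_vec_def)
qed

lemma self_in_class: "x \<in> zvec d \<Longrightarrow> x \<in> proj_class p n d x"
  unfolding proj_class_def by (auto intro!: exI[of _ 1])

theorem lemma3p11:
  fixes p :: int and n d :: nat and Rt :: "(nat \<Rightarrow> int) set" and v :: "nat \<Rightarrow> int"
  assumes "prime p" and "n \<ge> 1" and "d \<ge> 1"
    and "Rt \<in> proj_space p n d"
    and "v \<in> zvec d" and "v \<noteq> (\<lambda>_. 0)" and "primitive_vec d v"
    and "reduces_to p n d v Rt"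
  shows "(\<forall>w \<in> zvec d. w \<noteq> (\<lambda>_. 0) \<and> reduces_to p n d w Rt \<longrightarrow>
            w \<in> lattice_gen (v # map (\<lambda>i. (\<lambda>j. p ^ n * std_basis i j)) [0..<d+1]))
       \<and> (\<forall>a :: nat \<Rightarrow> int. \<not> p dvd a 0 \<longrightarrow>
            reduces_to p n d
              (\<lambda>j. a 0 * v j + p ^ n * (\<Sum>i\<le>d. a (i+1) * std_basis i j)) Rt)"
proof -
  obtain v0 a0 b0 where v0: "v0 \<in> zvec d" "primitive_vec d v0" "a0 \<noteq> 0" "b0 \<noteq> 0"
    "\<forall>i\<le>d. a0 * v0 i = b0 * v i" "proj_class p n d v0 = Rt"
    using assms(8) unfolding reduces_to_def by blast
  obtain m where m: "\<forall>i\<le>d. v i = m * v0 i" using L2[OF v0(2) v0(4) v0(5)] by blast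
  have "m dvd 1" using L3[OF assms(7) m] .
  then have "coprime m p" by (simp add: is_unit_left_imp_coprime)
  then have Rt: "Rt = proj_class p n d v"
    using L1[where x=v and y=v0 and n=n and c=m and p=p and d=d] m v0(6) assms(2) by simp
  let ?gs = "v # map (\<lambda>i. (\<lambda>j. p ^ n * std_basis i j)) [0..<d+1]"
  have sb: "(\<Sum>i<d+1. f i * std_basis i j) = (if j \<le> d then f j else 0)" for f :: "nat \<Rightarrow> int" and j
    unfolding std_basis_def by (simp add: if_distrib cong: if_cong)
  have lat: "(\<lambda>j. \<Sum>k<length ?gs. c k * (?gs ! k) j) =
      (\<lambda>j. c 0 * v j + p ^ n * (if j \<le> d then c (j+1) else 0))" for c
  proof
    fix j
    have "(\<Sum>k<length ?gs. c k * (?gs ! k) j) = c 0 * v j + (\<Sum>k<d+1. c (Suc k) * (p ^ n * std_basis k j))"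
    proof -
      have "(\<Sum>k<length ?gs. c k * (?gs ! k) j) = c 0 * v j + (\<Sum>k<d+1. c (Suc k) * (?gs ! Suc k) j)"
        by (simp only: length_Cons length_map length_upt diff_zero sum.lessThan_Suc_shift) simp
      also have "(\<Sum>k<d+1. c (Suc k) * (?gs ! Suc k) j) = (\<Sum>k<d+1. c (Suc k) * (p ^ n * std_basis k j))"
        by (rule sum.cong) (simp_all del: upt_Suc)
      finally show ?thesis .
    qed
    also have "(\<Sum>k<d+1. c (Suc k) * (p ^ n * std_basis k j)) = p ^ n * (\<Sum>k<d+1. c (Suc k) * std_basis k j)"
      by (simp add: sum_distrib_left ac_simps del: sum.lessThan_Suc)
    finally show "(\<Sum>k<length ?gs. c k * (?gs ! k) j) = c 0 * v j + p ^ n * (if j \<le> d then c (j+1) else 0)"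
      using sb[of "\<lambda>k. c (Suc k)" j] by simp
  qed
  have part1: "\<forall>w \<in> zvec d. w \<noteq> (\<lambda>_. 0) \<and> reduces_to p n d w Rt \<longrightarrow> w \<in> lattice_gen ?gs"
  proof (intro ballI impI)
    fix w assume w: "w \<in> zvec d" "w \<noteq> (\<lambda>_. 0) \<and> reduces_to p n d w Rt"
    obtain v' a' b' where v': "v' \<in> zvec d" "primitive_vec d v'" "a' \<noteq> 0" "b' \<noteq> 0"
      "\<forall>i\<le>d. a' * v' i = b' * w i" "proj_class p n d v' = Rt"
      using w(2) unfolding reduces_to_def by blast
    obtain k where k: "\<forall>i\<le>d. w i = k * v' i" using L2[OF v'(2) v'(4) v'(5)] by blast
    have "v' \<in> proj_class p n d v" using self_in_class[OF v'(1), of p n] v'(6) Rt by simp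
    then obtain c where c: "\<forall>i\<le>d. [v' i = c * v i] (mod p ^ n)" unfolding proj_class_def by blast
    have "\<forall>i\<le>d. \<exists>t. w i = (k * c) * v i + p ^ n * t"
    proof (intro allI impI)
      fix i assume i: "i \<le> d"
      have "[w i = k * (c * v i)] (mod p ^ n)" using k c i cong_scalar_left by metis
      then have "[(k * c) * v i = w i] (mod p ^ n)" by (simp add: cong_sym mult.assoc)
      then show "\<exists>t. w i = (k * c) * v i + p ^ n * t" by (simp add: cong_iff_lin)
    qed
    then obtain t where t: "\<forall>i\<le>d. w i = (k * c) * v i + p ^ n * t i" by metis
    define cc where "cc = (\<lambda>j. if j = 0 then k * c else t (j - 1))"
    have "w = (\<lambda>j. cc 0 * v j + p ^ n * (if j \<le> d then cc (j+1) else 0))"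
    proof
      fix j show "w j = cc 0 * v j + p ^ n * (if j \<le> d then cc (j+1) else 0)"
        using t w(1) assms(5) by (cases "j \<le> d") (auto simp: cc_def zvec_def)
    qed
    then have "w = (\<lambda>j. \<Sum>k<length ?gs. cc k * (?gs ! k) j)" using lat[of cc] by simp
    then show "w \<in> lattice_gen ?gs" unfolding lattice_gen_def by blast
  qed
  have part2: "\<forall>a :: nat \<Rightarrow> int. \<not> p dvd a 0 \<longrightarrow>
            reduces_to p n d (\<lambda>j. a 0 * v j + p ^ n * (\<Sum>i\<le>d. a (i+1) * std_basis i j)) Rt"
  proof (intro allI impI)
    fix a :: "nat \<Rightarrow> int" assume a0: "\<not> p dvd a 0"
    define u where "u = (\<lambda>j. a 0 * v j + p ^ n * (\<Sum>i\<le>d. a (i+1) * std_basis i j))"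
    have u: "u j = a 0 * v j + p ^ n * (if j \<le> d then a (j+1) else 0)" for j
      using sb[of "\<lambda>i. a (i+1)" j] unfolding u_def by (simp add: lessThan_Suc_atMost)
    have ucong: "[u i = a 0 * v i] (mod p ^ n)" for i
      unfolding u cong_iff_dvd_diff by simp
    obtain i0 where i0: "i0 \<le> d" "\<not> p dvd v i0"
    proof -
      { assume "\<forall>i\<le>d. p dvd v i"
        then have "p dvd Gcd (v ` {..d})" by (auto simp: dvd_Gcd_iff)
        then have "p dvd 1" using assms(7) by (simp add: primitive_vec_def)
        then have False using assms(1) by (meson not_prime_unit)
      } then show ?thesis using that by blast
    qed
    have pdvd: "p dvd p ^ n" using assms(2) by (simp add: dvd_power)
    have nu: "\<not> p dvd u i0"
    proof
      assume "p dvd u i0"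
      moreover have "p dvd u i0 - a 0 * v i0" using ucong[of i0] pdvd
        by (meson cong_iff_dvd_diff dvd_trans)
      ultimately have "p dvd a 0 * v i0" by (metis dvd_diff_right_iff dvd_diff)
      then show False using a0 i0(2) assms(1) by (simp add: prime_dvd_mult_iff)
    qed
    define g where "g = Gcd (u ` {..d})"
    have gdvd: "g dvd u i" if "i \<le> d" for i unfolding g_def using that by (simp add: Gcd_dvd)
    have gp: "\<not> p dvd g" using nu gdvd[OF i0(1)] dvd_trans by blast
    have g0: "g \<noteq> 0" using gp by auto
    have gnn: "g \<ge> 0" unfolding g_def
      by (metis Gcd_int_greater_eq_0)
    define v' where "v' = (\<lambda>j. if j \<le> d then u j div g else 0)"
    have gv': "g * v' i = u i" if "i \<le> d" for i
      using gdvd[OF that] that by (simp add: v'_def)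
    have v'z: "v' \<in> zvec d" by (simp add: v'_def zvec_def)
    have prim: "primitive_vec d v'"
    proof -
      define h where "h = Gcd (v' ` {..d})"
      have "(*) g ` (v' ` {..d}) = u ` {..d}" using gv' by (force simp: image_image)
      then have "g = normalize (g * h)" using Gcd_mult[of g "v' ` {..d}"] by (simp add: g_def h_def)
      moreover have "h \<ge> 0" unfolding h_def by (metis Gcd_int_greater_eq_0)
      ultimately have "g = g * h" using gnn by simp
      then have "h = 1" using g0 by simp
      then show ?thesis by (simp add: primitive_vec_def h_def)
    qed
    have cpg: "coprime g (p ^ n)" using prime_imp_power_coprime[OF assms(1) gp] .
    obtain gi where gi: "[g * gi = 1] (mod p ^ n)" using cong_solve_coprime_int[OF cpg] by blast
    have gip: "\<not> p dvd gi"
    proof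
      assume "p dvd gi"
      then have "p dvd g * gi" by simp
      moreover have "p dvd g * gi - 1" using gi pdvd by (meson cong_iff_dvd_diff dvd_trans)
      ultimately have "p dvd 1" by (metis dvd_diff_right_iff)
      then show False using assms(1) by (meson not_prime_unit)
    qed
    have cc: "coprime (gi * a 0) p"
      using prime_imp_coprime[OF assms(1) gip] prime_imp_coprime[OF assms(1) a0]
      by (simp add: coprime_commute)
    have "\<forall>i\<le>d. [v' i = (gi * a 0) * v i] (mod p ^ n)"
    proof (intro allI impI)
      fix i assume i: "i \<le> d"
      have "[1 * v' i = (g * gi) * v' i] (mod p ^ n)" using gi cong_scalar_right cong_sym by blast
      also have "(g * gi) * v' i = gi * u i" using gv'[OF i] by (simp add: ac_simps)
      also have "[gi * u i = gi * (a 0 * v i)] (mod p ^ n)" using ucong cong_scalar_left by blast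
      finally show "[v' i = (gi * a 0) * v i] (mod p ^ n)" by (simp add: ac_simps)
    qed
    then have "proj_class p n d v' = Rt" using L1[OF cc _ assms(2)] Rt by simp
    then show "reduces_to p n d u Rt" unfolding reduces_to_def
      using v'z prim g0 gv' by (intro exI[of _ v'] conjI exI[of _ g] exI[of _ 1]) auto
  qed
  show ?thesis using part1 part2 by blast
qed

end
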